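(* Let $\mathcal{X}=\{1,\dots,n\}$, let $\pi$ be a strictly positive probability distribution on $\mathcal{X}$, let $P$ be a $\pi$-reversible transition matrix, and fix $\alpha\in(0,1)$. For $S\subset\mathcal{X}$ with $S\neq\emptyset,\mathcal{X}$, let $G_S$ be the Gibbs kernel induced by the partition $\mathcal{X}=S\sqcup S'$ and $A_\alpha(S)=\alpha P+(1-\alpha)G_S$. Then any symmetrised Cheeger cut of $P$ maximises $S\mapsto\|A_\alpha(S)-\Pi\|_{F,\pi}^2$, and $$\max_{S\neq\mathcal{X},\emptyset}\|A_\alpha(S)-\Pi\|_{F,\pi}^2=\alpha^2\operatorname{Tr}(P^2)-2\alpha(1-\alpha)\phi^*(P)+1-2\alpha^2.$$
   Context: $S'=\mathcal{X}\setminus S$. $\pi$-reversible means $\pi(x)P(x,y)=\pi(y)P(y,x)$. The Gibbs kernel of a partition is $G(x,y)=\pi(y)/\pi(\mathcal{O}(x))$ if $y\in\mathcal{O}(x)$ and $0$ otherwise ($\mathcal{O}(x)$ the block containing $x$). $\Pi$ is the matrix with every row equal to $\pi$; $\|M\|_{F,\pi}^2=\operatorname{Tr}(M^*M)$ with $M^*(x,y)=\pi(y)M(y,x)/\pi(x)$. The symmetrised Cheeger constant is $\phi^*(P)=\min_{S:\,0<\pi(S)<1}\frac{\sum_{x\in S,y\in S'}\pi(x)P(x,y)}{\pi(S)\pi(S')}$, and a symmetrised Cheeger cut is any $S$ attaining this minimum. *)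

theory Defs
  imports Complex_Main
begin

text \<open>State space: a finite type 'x (playing the role of {1,...,n}).
  Matrices are functions 'x => 'x => real.\<close>

definition prob_pos :: "('x::finite \<Rightarrow> real) \<Rightarrow> bool" where
  "prob_pos \<pi> \<longleftrightarrow> (\<forall>x. \<pi> x > 0) \<and> (\<Sum>x\<in>UNIV. \<pi> x) = 1"

definition transition_matrix :: "('x::finite \<Rightarrow> 'x \<Rightarrow> real) \<Rightarrow> bool" where
  "transition_matrix P \<longleftrightarrow> (\<forall>x y. P x y \<ge> 0) \<and> (\<forall>x. (\<Sum>y\<in>UNIV. P x y) = 1)"

definition reversible :: "('x \<Rightarrow> real) \<Rightarrow> ('x \<Rightarrow> 'x \<Rightarrow> real) \<Rightarrow> bool" where
  "reversible \<pi> P \<longleftrightarrow> (\<forall>x y. \<pi> x * P x y = \<pi> y * P y x)"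

definition measure_of :: "('x \<Rightarrow> real) \<Rightarrow> 'x set \<Rightarrow> real" where
  "measure_of \<pi> A = (\<Sum>x\<in>A. \<pi> x)"

text \<open>Gibbs kernel of a partition, given by the block map Blk (Blk x = block containing x).\<close>
definition gibbs_kernel :: "('x \<Rightarrow> real) \<Rightarrow> ('x \<Rightarrow> 'x set) \<Rightarrow> 'x \<Rightarrow> 'x \<Rightarrow> real" where
  "gibbs_kernel \<pi> Blk x y = (if y \<in> Blk x then \<pi> y / measure_of \<pi> (Blk x) else 0)"

definition cut_blocks :: "'x set \<Rightarrow> 'x \<Rightarrow> 'x set" where
  "cut_blocks S x = (if x \<in> S then S else - S)"

definition A_alpha :: "real \<Rightarrow> ('x \<Rightarrow> real) \<Rightarrow> ('x \<Rightarrow> 'x \<Rightarrow> real) \<Rightarrow> 'x set \<Rightarrow> 'x \<Rightarrow> 'x \<Rightarrow> real" where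
  "A_alpha \<alpha> \<pi> P S x y = \<alpha> * P x y + (1 - \<alpha>) * gibbs_kernel \<pi> (cut_blocks S) x y"

definition Pi_mat :: "('x \<Rightarrow> real) \<Rightarrow> 'x \<Rightarrow> 'x \<Rightarrow> real" where
  "Pi_mat \<pi> x y = \<pi> y"

definition mat_mult :: "('x::finite \<Rightarrow> 'x \<Rightarrow> real) \<Rightarrow> ('x \<Rightarrow> 'x \<Rightarrow> real) \<Rightarrow> 'x \<Rightarrow> 'x \<Rightarrow> real" where
  "mat_mult M N x y = (\<Sum>z\<in>UNIV. M x z * N z y)"

definition mat_trace :: "('x::finite \<Rightarrow> 'x \<Rightarrow> real) \<Rightarrow> real" where
  "mat_trace M = (\<Sum>x\<in>UNIV. M x x)"

text \<open>Adjoint in L^2(\<pi>): M*(x,y) = \<pi>(y) M(y,x) / \<pi>(x).\<close>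
definition adjoint :: "('x \<Rightarrow> real) \<Rightarrow> ('x \<Rightarrow> 'x \<Rightarrow> real) \<Rightarrow> 'x \<Rightarrow> 'x \<Rightarrow> real" where
  "adjoint \<pi> M x y = \<pi> y * M y x / \<pi> x"

definition frob_sq :: "('x::finite \<Rightarrow> real) \<Rightarrow> ('x \<Rightarrow> 'x \<Rightarrow> real) \<Rightarrow> real" where
  "frob_sq \<pi> M = mat_trace (mat_mult (adjoint \<pi> M) M)"

definition cheeger_ratio :: "('x::finite \<Rightarrow> real) \<Rightarrow> ('x \<Rightarrow> 'x \<Rightarrow> real) \<Rightarrow> 'x set \<Rightarrow> real" where
  "cheeger_ratio \<pi> P S =
     (\<Sum>x\<in>S. \<Sum>y\<in>- S. \<pi> x * P x y) / (measure_of \<pi> S * measure_of \<pi> (- S))"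

definition sym_cheeger :: "('x::finite \<Rightarrow> real) \<Rightarrow> ('x \<Rightarrow> 'x \<Rightarrow> real) \<Rightarrow> real" where
  "sym_cheeger \<pi> P = Min {cheeger_ratio \<pi> P S | S. 0 < measure_of \<pi> S \<and> measure_of \<pi> S < 1}"

definition sym_cheeger_cut :: "('x::finite \<Rightarrow> real) \<Rightarrow> ('x \<Rightarrow> 'x \<Rightarrow> real) \<Rightarrow> 'x set \<Rightarrow> bool" where
  "sym_cheeger_cut \<pi> P S \<longleftrightarrow> 0 < measure_of \<pi> S \<and> measure_of \<pi> S < 1 \<and>
     cheeger_ratio \<pi> P S = sym_cheeger \<pi> P"

end

theory Submission
  imports Defs
begin

lemma sum_if_restr: "(\<Sum>y\<in>(UNIV::'a::finite set). if y \<in> T then f y else 0) = (\<Sum>y\<in>T. f y)"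
  by (simp add: sum.inter_restrict[symmetric])

lemma sum_split_compl: "(\<Sum>y\<in>(UNIV::'a::finite set). f y) = (\<Sum>y\<in>T. f y) + (\<Sum>y\<in>-T. f y)"
proof -
  have "sum f (T \<union> -T) = sum f T + sum f (-T)" by (rule sum.union_disjoint) auto
  then show ?thesis by simp
qed

lemma frob_expand:
  fixes \<pi> :: "'x::finite \<Rightarrow> real"
  shows "frob_sq \<pi> M = (\<Sum>x\<in>UNIV. \<Sum>y\<in>UNIV. \<pi> x * (M x y)^2 / \<pi> y)"
  unfolding frob_sq_def mat_trace_def mat_mult_def adjoint_def
  by (subst sum.swap) (simp add: power2_eq_square algebra_simps)

lemma key:
  fixes \<pi> :: "'x::finite \<Rightarrow> real" and P :: "'x \<Rightarrow> 'x \<Rightarrow> real" and \<alpha> :: real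
  assumes pp: "prob_pos \<pi>" and tm: "transition_matrix P" and rv: "reversible \<pi> P"
    and T1: "T \<noteq> {}" and T2: "T \<noteq> UNIV"
  shows "frob_sq \<pi> (\<lambda>x y. A_alpha \<alpha> \<pi> P T x y - Pi_mat \<pi> x y)
     = \<alpha>\<^sup>2 * mat_trace (mat_mult P P) - 2 * \<alpha> * (1 - \<alpha>) * cheeger_ratio \<pi> P T + 1 - 2 * \<alpha>\<^sup>2"
proof -
  have pos: "\<And>x. \<pi> x > 0" and s1: "(\<Sum>x\<in>UNIV. \<pi> x) = 1" using pp unfolding prob_pos_def by auto
  have pne: "\<And>y. \<pi> y \<noteq> 0" using pos by (metis less_irrefl)
  have rows: "\<And>x. (\<Sum>y\<in>UNIV. P x y) = 1" using tm unfolding transition_matrix_def by auto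
  have rev: "\<And>x y. \<pi> x * P x y = \<pi> y * P y x" using rv unfolding reversible_def by auto
  define p where "p = measure_of \<pi> T"
  define q where "q = measure_of \<pi> (-T)"
  define G where "G = gibbs_kernel \<pi> (cut_blocks T)"
  define Q where "Q = (\<Sum>x\<in>T. \<Sum>y\<in>-T. \<pi> x * P x y)"
  have pq: "p + q = 1" using s1 sum_split_compl[of \<pi> T] unfolding p_def q_def measure_of_def by simp
  have ppos: "p > 0" unfolding p_def measure_of_def using T1 pos
    by (simp add: sum_pos)
  have qpos: "q > 0" unfolding q_def measure_of_def using T2 pos
    by (intro sum_pos) auto
  have GT: "\<And>x y. x \<in> T \<Longrightarrow> G x y = (if y \<in> T then \<pi> y / p else 0)"
    unfolding G_def gibbs_kernel_def cut_blocks_def p_def by simp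
  have GN: "\<And>x y. x \<notin> T \<Longrightarrow> G x y = (if y \<in> -T then \<pi> y / q else 0)"
    unfolding G_def gibbs_kernel_def cut_blocks_def q_def by simp
  have Grow: "\<And>x. (\<Sum>y\<in>UNIV. G x y) = 1"
  proof -
    fix x
    show "(\<Sum>y\<in>UNIV. G x y) = 1"
    proof (cases "x \<in> T")
      case True
      then have "(\<Sum>y\<in>UNIV. G x y) = (\<Sum>y\<in>T. \<pi> y / p)" by (simp add: GT sum_if_restr)
      also have "\<dots> = 1" using ppos by (simp add: sum_divide_distrib[symmetric] p_def measure_of_def)
      finally show ?thesis .
    next
      case False
      then have "(\<Sum>y\<in>UNIV. G x y) = (\<Sum>y\<in>-T. \<pi> y / q)" by (simp add: GN sum_if_restr del: Compl_iff)
      also have "\<dots> = 1" using qpos by (simp add: sum_divide_distrib[symmetric] q_def measure_of_def)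
      finally show ?thesis .
    qed
  qed
  have A_eq: "\<And>x y. A_alpha \<alpha> \<pi> P T x y = \<alpha> * P x y + (1 - \<alpha>) * G x y"
    unfolding A_alpha_def G_def by simp
  have pt: "\<And>x y. \<pi> x * (\<alpha> * P x y + (1 - \<alpha>) * G x y - \<pi> y)^2 / \<pi> y =
      \<alpha>\<^sup>2 * (\<pi> x * (P x y)^2 / \<pi> y) + 2 * \<alpha> * (1 - \<alpha>) * (\<pi> x * P x y * G x y / \<pi> y)
      + (1 - \<alpha>)\<^sup>2 * (\<pi> x * (G x y)^2 / \<pi> y) - 2 * (\<pi> x * (\<alpha> * P x y + (1 - \<alpha>) * G x y))
      + \<pi> x * \<pi> y"
  proof -
    fix x y
    have "\<pi> y \<noteq> 0" using pos[of y] by simp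
    then show "?thesis x y" by (simp add: field_simps power2_eq_square)
  qed
  define FP where "FP = (\<Sum>x\<in>UNIV. \<Sum>y\<in>UNIV. \<pi> x * (P x y)^2 / \<pi> y)"
  define C where "C = (\<Sum>x\<in>UNIV. \<Sum>y\<in>UNIV. \<pi> x * P x y * G x y / \<pi> y)"
  define FG where "FG = (\<Sum>x\<in>UNIV. \<Sum>y\<in>UNIV. \<pi> x * (G x y)^2 / \<pi> y)"
  have R1: "(\<Sum>x\<in>UNIV. \<Sum>y\<in>UNIV. \<pi> x * (\<alpha> * P x y + (1 - \<alpha>) * G x y)) = 1"
  proof -
    have "\<And>x. (\<Sum>y\<in>UNIV. \<pi> x * (\<alpha> * P x y + (1 - \<alpha>) * G x y)) = \<pi> x"
    proof -
      fix x
      have "(\<Sum>y\<in>UNIV. \<pi> x * (\<alpha> * P x y + (1 - \<alpha>) * G x y)) = \<pi> x * (\<alpha> * (\<Sum>y\<in>UNIV. P x y) + (1 - \<alpha>) * (\<Sum>y\<in>UNIV. G x y))"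
        by (simp only: sum_distrib_left sum.distrib[symmetric])
      then show "(\<Sum>y\<in>UNIV. \<pi> x * (\<alpha> * P x y + (1 - \<alpha>) * G x y)) = \<pi> x"
        by (simp add: rows Grow)
    qed
    then show ?thesis using s1 by simp
  qed
  have R2: "(\<Sum>x\<in>UNIV. \<Sum>y\<in>UNIV. \<pi> x * \<pi> y) = 1"
    using s1 by (simp add: sum_distrib_left[symmetric])
  have main: "frob_sq \<pi> (\<lambda>x y. A_alpha \<alpha> \<pi> P T x y - Pi_mat \<pi> x y)
      = \<alpha>\<^sup>2 * FP + 2 * \<alpha> * (1 - \<alpha>) * C + (1 - \<alpha>)\<^sup>2 * FG - 2 * 1 + 1"
    unfolding frob_expand A_eq Pi_mat_def pt FP_def C_def FG_def
    by (simp only: sum.distrib sum_subtractf sum_distrib_left[symmetric]) (simp add: rows Grow s1)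
  have FPv: "FP = mat_trace (mat_mult P P)"
  proof -
    have "\<And>x y. \<pi> x * (P x y)^2 / \<pi> y = P x y * P y x"
    proof -
      fix x y
      have "\<pi> y \<noteq> 0" using pos[of y] by simp
      then show "\<pi> x * (P x y)^2 / \<pi> y = P x y * P y x"
        using rev[of x y] by (simp add: field_simps power2_eq_square)
    qed
    then show ?thesis unfolding FP_def mat_trace_def mat_mult_def by simp
  qed
  have rowsplit: "\<And>x. (\<Sum>y\<in>T. \<pi> x * P x y) + (\<Sum>y\<in>-T. \<pi> x * P x y) = \<pi> x"
    by (metis rows sum_split_compl distrib_left mult.right_neutral sum_distrib_left)
  have QQ: "(\<Sum>x\<in>-T. \<Sum>y\<in>T. \<pi> x * P x y) = Q"
  proof -
    have "(\<Sum>x\<in>-T. \<Sum>y\<in>T. \<pi> x * P x y) = (\<Sum>x\<in>-T. \<Sum>y\<in>T. \<pi> y * P y x)"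
      using rev by simp
    also have "\<dots> = Q" unfolding Q_def by (rule sum.swap)
    finally show ?thesis .
  qed
  have CT: "(\<Sum>x\<in>T. \<Sum>y\<in>T. \<pi> x * P x y) = p - Q"
  proof -
    have "(\<Sum>x\<in>T. \<Sum>y\<in>T. \<pi> x * P x y) = (\<Sum>x\<in>T. \<pi> x - (\<Sum>y\<in>-T. \<pi> x * P x y))"
      by (rule sum.cong[OF refl]) (metis rowsplit add_diff_cancel_left' add_diff_cancel_right')
    then show ?thesis by (simp add: sum_subtractf Q_def p_def measure_of_def)
  qed
  have CN: "(\<Sum>x\<in>-T. \<Sum>y\<in>-T. \<pi> x * P x y) = q - Q"
  proof -
    have "(\<Sum>x\<in>-T. \<Sum>y\<in>-T. \<pi> x * P x y) = (\<Sum>x\<in>-T. \<pi> x - (\<Sum>y\<in>T. \<pi> x * P x y))"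
      by (rule sum.cong[OF refl]) (metis rowsplit add_diff_cancel_left' add_diff_cancel_right')
    then show ?thesis using QQ by (simp add: sum_subtractf q_def measure_of_def)
  qed
  have Cv: "C = (p - Q) / p + (q - Q) / q"
  proof -
    have inT: "\<And>x. x \<in> T \<Longrightarrow> (\<Sum>y\<in>UNIV. \<pi> x * P x y * G x y / \<pi> y) = (\<Sum>y\<in>T. \<pi> x * P x y) / p"
    proof -
      fix x assume x: "x \<in> T"
      have "(\<Sum>y\<in>UNIV. \<pi> x * P x y * G x y / \<pi> y) = (\<Sum>y\<in>UNIV. if y \<in> T then \<pi> x * P x y / p else 0)"
        by (rule sum.cong) (use pos in \<open>auto simp: pne GT[OF x]\<close>)
      then show "?thesis x" by (simp add: sum_if_restr sum_divide_distrib)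
    qed
    have inN: "\<And>x. x \<in> -T \<Longrightarrow> (\<Sum>y\<in>UNIV. \<pi> x * P x y * G x y / \<pi> y) = (\<Sum>y\<in>-T. \<pi> x * P x y) / q"
    proof -
      fix x assume x: "x \<in> -T"
      have "(\<Sum>y\<in>UNIV. \<pi> x * P x y * G x y / \<pi> y) = (\<Sum>y\<in>UNIV. if y \<in> -T then \<pi> x * P x y / q else 0)"
        by (rule sum.cong) (use pos x in \<open>auto simp: pne GN\<close>)
      then show "?thesis x" by (simp only: sum_if_restr sum_divide_distrib)
    qed
    have "C = (\<Sum>x\<in>T. (\<Sum>y\<in>T. \<pi> x * P x y) / p) + (\<Sum>x\<in>-T. (\<Sum>y\<in>-T. \<pi> x * P x y) / q)"
      unfolding C_def by (subst sum_split_compl[of _ T]) (simp add: inT inN del: Compl_iff)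
    then show ?thesis using CT CN by (simp add: sum_divide_distrib[symmetric])
  qed
  have FGv: "FG = 2"
  proof -
    have inT: "\<And>x. x \<in> T \<Longrightarrow> (\<Sum>y\<in>UNIV. \<pi> x * (G x y)^2 / \<pi> y) = \<pi> x / p"
    proof -
      fix x assume x: "x \<in> T"
      have "(\<Sum>y\<in>UNIV. \<pi> x * (G x y)^2 / \<pi> y) = (\<Sum>y\<in>UNIV. if y \<in> T then \<pi> x * \<pi> y / p^2 else 0)"
        by (rule sum.cong) (use pos in \<open>auto simp: pne GT[OF x] power2_eq_square\<close>)
      also have "\<dots> = (\<Sum>y\<in>T. \<pi> x * \<pi> y) / p^2" by (simp add: sum_if_restr sum_divide_distrib)
      also have "\<dots> = \<pi> x * p / p^2" by (simp add: sum_distrib_left[symmetric] p_def measure_of_def)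
      also have "\<dots> = \<pi> x / p" using ppos by (simp add: power2_eq_square)
      finally show "?thesis x" .
    qed
    have inN: "\<And>x. x \<in> -T \<Longrightarrow> (\<Sum>y\<in>UNIV. \<pi> x * (G x y)^2 / \<pi> y) = \<pi> x / q"
    proof -
      fix x assume x: "x \<in> -T"
      have "(\<Sum>y\<in>UNIV. \<pi> x * (G x y)^2 / \<pi> y) = (\<Sum>y\<in>UNIV. if y \<in> -T then \<pi> x * \<pi> y / q^2 else 0)"
        by (rule sum.cong) (use pos x in \<open>auto simp: pne GN power2_eq_square\<close>)
      also have "\<dots> = (\<Sum>y\<in>-T. \<pi> x * \<pi> y) / q^2" by (simp only: sum_if_restr sum_divide_distrib)
      also have "\<dots> = \<pi> x * q / q^2" by (simp add: sum_distrib_left[symmetric] q_def measure_of_def)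
      also have "\<dots> = \<pi> x / q" using qpos by (simp add: power2_eq_square)
      finally show "?thesis x" .
    qed
    have "FG = (\<Sum>x\<in>T. \<pi> x / p) + (\<Sum>x\<in>-T. \<pi> x / q)"
      unfolding FG_def by (subst sum_split_compl[of _ T]) (simp add: inT inN del: Compl_iff)
    also have "\<dots> = p / p + q / q"
      by (simp add: sum_divide_distrib[symmetric] p_def q_def measure_of_def)
    finally show ?thesis using ppos qpos by simp
  qed
  have ch: "cheeger_ratio \<pi> P T = Q / (p * q)"
    unfolding cheeger_ratio_def Q_def p_def q_def by simp
  have Cv2: "C = 2 - Q / (p * q)"
  proof -
    have "(p - Q) / p + (q - Q) / q = 2 - Q * (p + q) / (p * q)"
      using ppos qpos by (simp add: field_simps)
    then show ?thesis using Cv pq by simp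
  qed
  show ?thesis unfolding main FPv FGv Cv2 ch[symmetric]
    by (simp add: algebra_simps power2_eq_square)
qed

lemma proper_iff:
  fixes \<pi> :: "'x::finite \<Rightarrow> real"
  assumes pp: "prob_pos \<pi>"
  shows "(0 < measure_of \<pi> S \<and> measure_of \<pi> S < 1) \<longleftrightarrow> (S \<noteq> {} \<and> S \<noteq> UNIV)"
proof -
  have pos: "\<And>x. \<pi> x > 0" and s1: "(\<Sum>x\<in>UNIV. \<pi> x) = 1" using pp unfolding prob_pos_def by auto
  have sp: "measure_of \<pi> S + measure_of \<pi> (-S) = 1"
    using s1 sum_split_compl[of \<pi> S] unfolding measure_of_def by simp
  have a: "measure_of \<pi> A > 0 \<longleftrightarrow> A \<noteq> {}" for A
  proof
    assume "measure_of \<pi> A > 0" then show "A \<noteq> {}" unfolding measure_of_def by auto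
  next
    assume "A \<noteq> {}" then show "measure_of \<pi> A > 0" unfolding measure_of_def
      using pos by (intro sum_pos) auto
  qed
  have "measure_of \<pi> S < 1 \<longleftrightarrow> -S \<noteq> {}" using a[of "-S"] sp by linarith
  then show ?thesis using a[of S] by auto
qed

theorem corollary4p6:
  fixes \<pi> :: "'x::finite \<Rightarrow> real" and P :: "'x \<Rightarrow> 'x \<Rightarrow> real" and \<alpha> :: real
  assumes "card (UNIV :: 'x set) \<ge> 2"
    and "prob_pos \<pi>"
    and "transition_matrix P"
    and "reversible \<pi> P"
    and "0 < \<alpha>" and "\<alpha> < 1"
  shows "(\<forall>S. sym_cheeger_cut \<pi> P S \<longrightarrow>
            (\<forall>T. T \<noteq> {} \<and> T \<noteq> UNIV \<longrightarrow>
               frob_sq \<pi> (\<lambda>x y. A_alpha \<alpha> \<pi> P T x y - Pi_mat \<pi> x y)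
                 \<le> frob_sq \<pi> (\<lambda>x y. A_alpha \<alpha> \<pi> P S x y - Pi_mat \<pi> x y)))
       \<and> Max {frob_sq \<pi> (\<lambda>x y. A_alpha \<alpha> \<pi> P S x y - Pi_mat \<pi> x y) | S. S \<noteq> {} \<and> S \<noteq> UNIV}
         = \<alpha>\<^sup>2 * mat_trace (mat_mult P P) - 2 * \<alpha> * (1 - \<alpha>) * sym_cheeger \<pi> P + 1 - 2 * \<alpha>\<^sup>2"
proof -
  define f where "f = (\<lambda>S. frob_sq \<pi> (\<lambda>x y. A_alpha \<alpha> \<pi> P S x y - Pi_mat \<pi> x y))"
  define r where "r = cheeger_ratio \<pi> P"
  define K where "K = \<alpha>\<^sup>2 * mat_trace (mat_mult P P) + 1 - 2 * \<alpha>\<^sup>2"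
  define c where "c = 2 * \<alpha> * (1 - \<alpha>)"
  have cpos: "c > 0" unfolding c_def using assms(5,6) by simp
  have fT: "\<And>T. T \<noteq> {} \<and> T \<noteq> UNIV \<Longrightarrow> f T = K - c * r T"
    unfolding f_def K_def c_def r_def using key[OF assms(2,3,4)] by auto
  have setq: "{cheeger_ratio \<pi> P S | S. 0 < measure_of \<pi> S \<and> measure_of \<pi> S < 1}
      = r ` {S. S \<noteq> {} \<and> S \<noteq> UNIV}"
    unfolding r_def by (simp only: proper_iff[OF assms(2)]) blast
  have sc: "sym_cheeger \<pi> P = Min (r ` {S. S \<noteq> {} \<and> S \<noteq> UNIV})"
    unfolding sym_cheeger_def setq ..
  obtain a :: 'x where True by auto
  have "{a} \<noteq> UNIV"
  proof
    assume "{a} = UNIV"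
    then have "card (UNIV :: 'x set) = card {a}" by simp
    then show False using assms(1) by simp
  qed
  then have ne: "{S :: 'x set. S \<noteq> {} \<and> S \<noteq> UNIV} \<noteq> {}" by blast
  have fin: "finite (r ` {S :: 'x set. S \<noteq> {} \<and> S \<noteq> UNIV})" by simp
  have minle: "sym_cheeger \<pi> P \<le> r T" if T: "T \<noteq> {} \<and> T \<noteq> UNIV" for T
  proof -
    have "r T \<in> r ` {S. S \<noteq> {} \<and> S \<noteq> UNIV}" using T by blast
    then show ?thesis unfolding sc by (rule Min_le[OF fin])
  qed
  have part1: "\<forall>S. sym_cheeger_cut \<pi> P S \<longrightarrow> (\<forall>T. T \<noteq> {} \<and> T \<noteq> UNIV \<longrightarrow> f T \<le> f S)"
  proof (intro allI impI)
    fix S T :: "'x set" assume S: "sym_cheeger_cut \<pi> P S" and T: "T \<noteq> {} \<and> T \<noteq> UNIV"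
    have cut: "0 < measure_of \<pi> S \<and> measure_of \<pi> S < 1" and rS0: "cheeger_ratio \<pi> P S = sym_cheeger \<pi> P"
      using S unfolding sym_cheeger_cut_def by auto
    have Sp: "S \<noteq> {} \<and> S \<noteq> UNIV" using cut proper_iff[OF assms(2), of S] by blast
    have rS: "r S = sym_cheeger \<pi> P" unfolding r_def by (rule rS0)
    have "c * r S \<le> c * r T" using minle[OF T] rS cpos by (intro mult_left_mono) auto
    then show "f T \<le> f S" using fT[OF T] fT[OF Sp] by linarith
  qed
  obtain S0 where S0: "S0 \<noteq> {} \<and> S0 \<noteq> UNIV" and rS0: "r S0 = sym_cheeger \<pi> P"
  proof -
    have ne2: "r ` {S. S \<noteq> {} \<and> S \<noteq> UNIV} \<noteq> {}" using ne by (simp only: image_is_empty not_False_eq_True)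
    have "Min (r ` {S. S \<noteq> {} \<and> S \<noteq> UNIV}) \<in> r ` {S. S \<noteq> {} \<and> S \<noteq> UNIV}"
      by (rule Min_in[OF fin ne2])
    then obtain S1 where S1: "S1 \<in> {S. S \<noteq> {} \<and> S \<noteq> UNIV}" and e1: "Min (r ` {S. S \<noteq> {} \<and> S \<noteq> UNIV}) = r S1"
      by (rule imageE)
    show ?thesis
    proof (rule that[of S1])
      show "S1 \<noteq> {} \<and> S1 \<noteq> UNIV" using S1 by (rule CollectD)
      show "r S1 = sym_cheeger \<pi> P" unfolding sc e1 ..
    qed
  qed
  have part2: "Max {f S | S. S \<noteq> {} \<and> S \<noteq> UNIV} = K - c * sym_cheeger \<pi> P"
  proof (rule Max_eqI)
    have "{f S | S. S \<noteq> {} \<and> S \<noteq> UNIV} = f ` {S. S \<noteq> {} \<and> S \<noteq> UNIV}" by blast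
    then show "finite {f S | S. S \<noteq> {} \<and> S \<noteq> UNIV}" by simp
  next
    fix y assume "y \<in> {f S | S. S \<noteq> {} \<and> S \<noteq> UNIV}"
    then obtain T where T: "T \<noteq> {} \<and> T \<noteq> UNIV" and y: "y = f T" by auto
    have "c * sym_cheeger \<pi> P \<le> c * r T" using minle[OF T] cpos by simp
    then show "y \<le> K - c * sym_cheeger \<pi> P" using fT[OF T] y by simp
  next
    show "K - c * sym_cheeger \<pi> P \<in> {f S | S. S \<noteq> {} \<and> S \<noteq> UNIV}"
    proof -
      have "K - c * sym_cheeger \<pi> P = f S0" using fT[OF S0] rS0 by simp
      then show ?thesis using S0 by blast
    qed
  qed
  have eq: "K - c * sym_cheeger \<pi> P = \<alpha>\<^sup>2 * mat_trace (mat_mult P P) - 2 * \<alpha> * (1 - \<alpha>) * sym_cheeger \<pi> P + 1 - 2 * \<alpha>\<^sup>2"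
    unfolding K_def c_def by simp
  show ?thesis using part1 part2 unfolding eq unfolding f_def by blast
qed

end
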